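(* Let $X$ be an almost surely positive random variable with finite mean $\mathbb{E}(X)$ and cumulative distribution function $F$, and let $X_1, X_2$ be two independent copies of $X$. Let $g$ be a positive real-valued integrable function of two positive variables which is symmetric, i.e. $g(u,v)=g(v,u)$ for all $u,v>0$. Let $X^*$ be a random variable independent of $X$ with cumulative distribution function $F_{X^*}(u)=\frac{1}{\mathbb{E}(X)}\int_0^u t\,{\rm d}F(t)$, $u>0$. Then $$\mathbb{E}[|X_1-X_2|\,g(X_1,X_2)] = 2\mathbb{E}(X)\Big\{2\mathbb{E}\big[g(X^*,X)\mathds{1}_{\{X<X^*\}}\big]-\mathbb{E}\big[g(X^*,X)\big]+\mathbb{E}\big[g(X^*,X)\mathds{1}_{\{X=X^*\}}\big]\Big\},$$ where $\mathds{1}_A$ denotes the indicator function of the event $A$. *)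

theory Defs
  imports "HOL-Probability.Probability"
begin

end

theory Submission
  imports Defs "HOL-Probability.Probability"
begin

theorem proposition1:
  fixes M :: "'a measure"
    and X X1 X2 Xs :: "'a \<Rightarrow> real"
    and g :: "real \<Rightarrow> real \<Rightarrow> real"
  assumes P: "prob_space M"
    and rv: "X \<in> borel_measurable M" "X1 \<in> borel_measurable M"
            "X2 \<in> borel_measurable M" "Xs \<in> borel_measurable M"
    and pos: "AE \<omega> in M. X \<omega> > 0"
    and mean: "integrable M X"
    and copy1: "distr M borel X1 = distr M borel X"
    and copy2: "distr M borel X2 = distr M borel X"
    and indep12: "prob_space.indep_var M borel X1 borel X2"
    and cdf_Xs: "\<forall>u>0. cdf (distr M borel Xs) u =
                   (1 / (\<integral>\<omega>. X \<omega> \<partial>M)) * (LINT t:{0<..u}|distr M borel X. t)"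
    and indepsX: "prob_space.indep_var M borel Xs borel X"
    and g_meas: "(\<lambda>(u, v). g u v) \<in> borel_measurable borel"
    and g_pos: "\<forall>u>0. \<forall>v>0. g u v > 0"
    and g_sym: "\<forall>u>0. \<forall>v>0. g u v = g v u"
    and g_int: "integrable M (\<lambda>\<omega>. g (Xs \<omega>) (X \<omega>))"
  shows "(\<integral>\<omega>. \<bar>X1 \<omega> - X2 \<omega>\<bar> * g (X1 \<omega>) (X2 \<omega>) \<partial>M) =
         2 * (\<integral>\<omega>. X \<omega> \<partial>M) *
           (2 * (\<integral>\<omega>. g (Xs \<omega>) (X \<omega>) * indicator {\<omega>. X \<omega> < Xs \<omega>} \<omega> \<partial>M)
            - (\<integral>\<omega>. g (Xs \<omega>) (X \<omega>) \<partial>M)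
            + (\<integral>\<omega>. g (Xs \<omega>) (X \<omega>) * indicator {\<omega>. X \<omega> = Xs \<omega>} \<omega> \<partial>M))"
proof -
  interpret prob_space M by (rule P)
  define \<mu> where "\<mu> = distr M borel X"
  define m where "m = (\<integral>\<omega>. X \<omega> \<partial>M)"
  have [measurable]: "X \<in> borel_measurable M" "X1 \<in> borel_measurable M"
            "X2 \<in> borel_measurable M" "Xs \<in> borel_measurable M" using rv by auto
  have Gm[measurable]: "(\<lambda>z. g (fst z) (snd z)) \<in> borel_measurable (borel \<Otimes>\<^sub>M borel)"
    using g_meas by (simp add: borel_prod split_beta')
  have Xnn: "AE \<omega> in M. 0 \<le> X \<omega>" using pos by eventually_elim auto
  have m_pos: "m > 0"
  proof -
    have "m \<ge> 0" unfolding m_def using Xnn by (rule integral_nonneg_AE)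
    moreover have "m \<noteq> 0"
    proof
      assume "m = 0"
      then have "AE \<omega> in M. X \<omega> = 0"
        using integral_nonneg_eq_0_iff_AE[OF mean Xnn] unfolding m_def by simp
      with pos have "AE \<omega> in M. False" by eventually_elim auto
      then show False by simp
    qed
    ultimately show ?thesis by simp
  qed
  have \<mu>_prob: "prob_space \<mu>" unfolding \<mu>_def by (rule prob_space_distr) simp
  interpret MU: prob_space \<mu> by (rule \<mu>_prob)
  have \<mu>_sets: "sets \<mu> = sets borel" unfolding \<mu>_def by simp
  have bm\<mu>[simp]: "measurable \<mu> N = measurable borel N" for N :: "'b measure"
    using \<mu>_sets by (intro measurable_cong_sets) simp_all
  have AE\<mu>: "AE t in \<mu>. t > 0" unfolding \<mu>_def using pos by (subst AE_distr_iff) auto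
  have \<mu>_int: "integrable \<mu> (\<lambda>t. t)" unfolding \<mu>_def using mean by (subst integrable_distr_eq) auto
  define \<nu> where "\<nu> = density \<mu> (\<lambda>t. ennreal (t / m))"
  have dm[measurable]: "(\<lambda>t::real. t / m) \<in> borel_measurable borel" by simp
  have AEdn: "AE t in \<mu>. 0 \<le> t / m" using AE\<mu> m_pos by (auto elim!: eventually_mono)
  have \<nu>_sets: "sets \<nu> = sets borel" unfolding \<nu>_def by (simp add: \<mu>_sets)
  have \<nu>_prob: "prob_space \<nu>"
  proof (rule prob_spaceI)
    have "emeasure \<nu> (space \<nu>) = (\<integral>\<^sup>+ t. ennreal (t / m) \<partial>\<mu>)"
      unfolding \<nu>_def \<mu>_def by (subst emeasure_density) (auto intro!: nn_integral_cong simp: indicator_def)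
    also have "\<dots> = (\<integral>\<^sup>+ \<omega>. ennreal (X \<omega> / m) \<partial>M)"
      unfolding \<mu>_def by (simp add: nn_integral_distr)
    also have "\<dots> = ennreal (\<integral>\<omega>. X \<omega> / m \<partial>M)"
      using Xnn m_pos mean by (intro nn_integral_eq_integral) auto
    also have "\<dots> = 1" using m_pos by (simp add: m_def)
    finally show "emeasure \<nu> (space \<nu>) = 1" .
  qed
  have \<nu>_rd: "real_distribution \<nu>"
    using \<nu>_prob \<nu>_sets by (simp add: real_distribution_def real_distribution_axioms_def)
  have Xs_rd: "real_distribution (distr M borel Xs)" by simp
  have cdf\<nu>: "cdf \<nu> u = (\<integral>t. t / m * indicator {..u} t \<partial>\<mu>)" for u
  proof -
    interpret Q: prob_space \<nu> by (rule \<nu>_prob)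
    have "cdf \<nu> u = measure \<nu> {..u}" by (simp add: cdf_def)
    also have "\<dots> = (\<integral>t. indicator {..u} t \<partial>\<nu>)"
      using sets_eq_imp_space_eq[OF \<nu>_sets] by simp
    also have "\<dots> = (\<integral>t. t / m * indicator {..u} t \<partial>\<mu>)"
      unfolding \<nu>_def using AEdn by (subst integral_density) auto
    finally show ?thesis .
  qed
  have cdf_pos: "cdf \<nu> u = cdf (distr M borel Xs) u" if "u > 0" for u
  proof -
    have "cdf \<nu> u = (\<integral>t. 1 / m * (indicator {0<..u} t *\<^sub>R t) \<partial>\<mu>)"
    proof -
      have "AE t in \<mu>. t / m * indicator {..u} t = 1 / m * (indicator {0<..u} t *\<^sub>R t)"
        using AE\<mu> by eventually_elim (auto simp: indicator_def)
      then show ?thesis unfolding cdf\<nu> by (intro integral_cong_AE) simp_all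
    qed
    also have "\<dots> = 1 / m * (LINT t:{0<..u}|\<mu>. t)"
      by (simp add: set_lebesgue_integral_def)
    finally show ?thesis using cdf_Xs that unfolding m_def \<mu>_def by simp
  qed
  have cdf_nonpos: "cdf \<nu> u = cdf (distr M borel Xs) u" if "u \<le> 0" for u
  proof -
    have "cdf \<nu> u = (\<integral>t. 0 \<partial>\<mu>)"
    proof -
      have "AE t in \<mu>. t / m * indicator {..u} t = 0"
        using AE\<mu> that by (auto simp: indicator_def elim!: eventually_mono)
      then show ?thesis unfolding cdf\<nu> by (intro integral_cong_AE) simp_all
    qed
    moreover have "cdf (distr M borel Xs) u = 0"
    proof (rule antisym)
      show "0 \<le> cdf (distr M borel Xs) u" by (rule finite_borel_measure.cdf_nonneg[OF real_distribution.finite_borel_measure_M[OF Xs_rd]])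
      show "cdf (distr M borel Xs) u \<le> 0"
      proof (rule field_le_epsilon)
        fix e :: real assume e: "0 < e"
        define d where "d = e * m"
        have d: "d > 0" using e m_pos by (simp add: d_def)
        have "cdf (distr M borel Xs) u \<le> cdf (distr M borel Xs) d"
          using that d by (intro finite_borel_measure.cdf_nondecreasing[OF real_distribution.finite_borel_measure_M[OF Xs_rd]]) simp
        also have "\<dots> = 1 / m * (LINT t:{0<..d}|\<mu>. t)" using cdf_Xs d unfolding m_def \<mu>_def by simp
        finally have c1: "cdf (distr M borel Xs) u \<le> 1 / m * (LINT t:{0<..d}|\<mu>. t)" .
        have "(LINT t:{0<..d}|\<mu>. t) \<le> (\<integral>t. d \<partial>\<mu>)"
          unfolding set_lebesgue_integral_def
          using \<mu>_int d integrable_mult_indicator[OF _ \<mu>_int, of "{0<..d}"] \<mu>_sets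
          by (intro integral_mono) (auto simp: indicator_def)
        also have "(\<integral>t. d \<partial>\<mu>) = d" by (simp add: MU.prob_space)
        finally have c2: "(LINT t:{0<..d}|\<mu>. t) \<le> d" .
        have "1 / m * (LINT t:{0<..d}|\<mu>. t) \<le> 1 / m * d"
          using c2 m_pos by (intro mult_left_mono) auto
        also have "1 / m * d = e" using m_pos by (simp add: d_def)
        finally show "cdf (distr M borel Xs) u \<le> 0 + e" using c1 by simp
      qed
    qed
    ultimately show ?thesis by simp
  qed
  have Xs_dist: "distr M borel Xs = \<nu>"
  proof (rule cdf_unique[OF Xs_rd \<nu>_rd], rule ext)
    fix u :: real
    show "cdf (distr M borel Xs) u = cdf \<nu> u"
    proof (cases "u > 0")
      case True then show ?thesis using cdf_pos[of u] by simp
    next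
      case False then show ?thesis using cdf_nonpos[of u] by simp
    qed
  qed
  interpret PS: pair_prob_space \<mu> \<mu> ..
  define PP where "PP = \<mu> \<Otimes>\<^sub>M \<mu>"
  have PP_sets: "sets PP = sets (borel \<Otimes>\<^sub>M borel)"
    unfolding PP_def by (intro sets_pair_measure_cong \<mu>_sets)
  have bmPP[simp]: "measurable PP N = measurable (borel \<Otimes>\<^sub>M borel) N" for N :: "'b measure"
    using PP_sets by (intro measurable_cong_sets) simp_all
  have J12: "distr M (borel \<Otimes>\<^sub>M borel) (\<lambda>\<omega>. (X1 \<omega>, X2 \<omega>)) = PP"
    using indep12 copy1 copy2 unfolding PP_def \<mu>_def by (simp add: indep_var_distribution_eq)
  have dens1: "density \<mu> (\<lambda>_. 1) = \<mu>" by (rule density_1)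
  have JsX: "distr M (borel \<Otimes>\<^sub>M borel) (\<lambda>\<omega>. (Xs \<omega>, X \<omega>)) = density PP (\<lambda>z. ennreal (fst z / m))"
  proof -
    have "distr M (borel \<Otimes>\<^sub>M borel) (\<lambda>\<omega>. (Xs \<omega>, X \<omega>)) = \<nu> \<Otimes>\<^sub>M \<mu>"
      using indepsX Xs_dist unfolding \<mu>_def by (simp add: indep_var_distribution_eq)
    also have "\<dots> = density \<mu> (\<lambda>t. ennreal (t / m)) \<Otimes>\<^sub>M density \<mu> (\<lambda>_. 1)"
      unfolding \<nu>_def dens1 ..
    also have "\<dots> = density PP (\<lambda>(x,y). ennreal (x / m) * 1)"
      unfolding PP_def
      by (rule pair_measure_density) (auto simp: dens1 intro: MU.sigma_finite_measure)
    also have "\<dots> = density PP (\<lambda>z. ennreal (fst z / m))"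
      by (rule arg_cong[where f="density PP"]) auto
    finally show ?thesis .
  qed
  have AEPP: "AE z in PP. fst z > 0 \<and> snd z > 0"
  proof -
    have "AE \<omega> in M. X1 \<omega> > 0"
      using AE\<mu> copy1 unfolding \<mu>_def by (subst (asm) copy1[symmetric]) (simp add: AE_distr_iff)
    moreover have "AE \<omega> in M. X2 \<omega> > 0"
      using AE\<mu> copy2 unfolding \<mu>_def by (subst (asm) copy2[symmetric]) (simp add: AE_distr_iff)
    ultimately have "AE \<omega> in M. X1 \<omega> > 0 \<and> X2 \<omega> > 0" by eventually_elim simp
    then show ?thesis unfolding J12[symmetric] by (subst AE_distr_iff) auto
  qed
  have T12: "(\<integral>\<omega>. F (X1 \<omega>, X2 \<omega>) \<partial>M) = (\<integral>z. F z \<partial>PP)"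
    if [measurable]: "F \<in> borel_measurable (borel \<Otimes>\<^sub>M borel)" for F :: "real \<times> real \<Rightarrow> real"
    unfolding J12[symmetric] by (subst integral_distr) auto
  have Ts: "(\<integral>\<omega>. F (Xs \<omega>, X \<omega>) \<partial>M) = (\<integral>z. fst z / m * F z \<partial>PP)"
    if [measurable]: "F \<in> borel_measurable (borel \<Otimes>\<^sub>M borel)" for F :: "real \<times> real \<Rightarrow> real"
  proof -
    have "(\<integral>\<omega>. F (Xs \<omega>, X \<omega>) \<partial>M) = (\<integral>z. F z \<partial>density PP (\<lambda>z. ennreal (fst z / m)))"
      unfolding JsX[symmetric] by (subst integral_distr) auto
    also have "\<dots> = (\<integral>z. fst z / m * F z \<partial>PP)"
      using AEPP m_pos by (subst integral_density) (auto elim!: eventually_mono)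
    finally show ?thesis .
  qed
  have Tsi: "integrable PP (\<lambda>z. fst z / m * F z)"
    if [measurable]: "F \<in> borel_measurable (borel \<Otimes>\<^sub>M borel)"
      and "integrable M (\<lambda>\<omega>. F (Xs \<omega>, X \<omega>))" for F :: "real \<times> real \<Rightarrow> real"
  proof -
    have "integrable (density PP (\<lambda>z. ennreal (fst z / m))) F"
      unfolding JsX[symmetric] using that(2) by (subst integrable_distr_eq) auto
    then show ?thesis
      using AEPP m_pos by (subst (asm) integrable_density) (auto elim!: eventually_mono)
  qed
  define G where "G = (\<lambda>z::real\<times>real. g (fst z) (snd z))"
  define \<phi> where "\<phi> = (\<lambda>z::real\<times>real. fst z * G z)"
  define \<psi> where "\<psi> = (\<lambda>z::real\<times>real. snd z * G z)"
  define Igt where "Igt = (indicator {z::real\<times>real. snd z < fst z} :: real\<times>real \<Rightarrow> real)"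
  define Ilt where "Ilt = (indicator {z::real\<times>real. fst z < snd z} :: real\<times>real \<Rightarrow> real)"
  define Ieq where "Ieq = (indicator {z::real\<times>real. fst z = snd z} :: real\<times>real \<Rightarrow> real)"
  have Gm2[measurable]: "G \<in> borel_measurable (borel \<Otimes>\<^sub>M borel)" unfolding G_def by (rule Gm)
  have phi_m[measurable]: "\<phi> \<in> borel_measurable (borel \<Otimes>\<^sub>M borel)" unfolding \<phi>_def by measurable
  have psi_m[measurable]: "\<psi> \<in> borel_measurable (borel \<Otimes>\<^sub>M borel)" unfolding \<psi>_def by measurable
  have Igt_m[measurable]: "Igt \<in> borel_measurable (borel \<Otimes>\<^sub>M borel)" unfolding Igt_def by measurable
  have Ilt_m[measurable]: "Ilt \<in> borel_measurable (borel \<Otimes>\<^sub>M borel)" unfolding Ilt_def by measurable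
  have Ieq_m[measurable]: "Ieq \<in> borel_measurable (borel \<Otimes>\<^sub>M borel)" unfolding Ieq_def by measurable
  have m0: "m \<noteq> 0" using m_pos by simp
  have bmPP'[measurable]: "F \<in> borel_measurable PP" if "F \<in> borel_measurable (borel \<Otimes>\<^sub>M borel)"
    for F :: "real \<times> real \<Rightarrow> real" using that bmPP[of "borel :: real measure"] by blast
  have int_phi: "integrable PP \<phi>"
  proof -
    have "integrable PP (\<lambda>z. fst z / m * G z)"
      using g_int by (intro Tsi[OF Gm2]) (simp add: G_def)
    then have "integrable PP (\<lambda>z. m * (fst z / m * G z))" by (rule integrable_mult_right)
    then show ?thesis using m0 by (simp add: \<phi>_def)
  qed
  have symAE: "AE z in PP. G (snd z, fst z) = G z"
    using AEPP
  proof eventually_elim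
    case (elim z)
    then show ?case using g_sym[rule_format, of "snd z" "fst z"] by (simp add: G_def)
  qed
  have swap: "(\<integral>z. F (snd z, fst z) \<partial>PP) = (\<integral>z. F z \<partial>PP)"
    if [measurable]: "F \<in> borel_measurable (borel \<Otimes>\<^sub>M borel)" for F :: "real \<times> real \<Rightarrow> real"
  proof -
    have Fm: "F \<in> borel_measurable (\<mu> \<Otimes>\<^sub>M \<mu>)"
      using that bmPP[of "borel :: real measure"] unfolding PP_def by blast
    have e: "(\<lambda>(x,y). F (y,x)) = (\<lambda>z. F (snd z, fst z))" by (rule ext) (auto split: prod.split)
    from PS.integral_product_swap[OF Fm] have "(\<integral>(x,y). F (y,x) \<partial>PP) = integral\<^sup>L PP F"
      unfolding PP_def .
    then show ?thesis unfolding e .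
  qed
  have int_psi: "integrable PP \<psi>"
  proof -
    have "integrable PP (\<lambda>(x,y). \<phi> (y,x))"
      using PS.integrable_product_swap[of \<phi>] int_phi unfolding PP_def by simp
    moreover have e\<phi>: "(\<lambda>(x,y). \<phi> (y,x)) = (\<lambda>z. \<phi> (snd z, fst z))"
      by (rule ext) (auto split: prod.split)
    ultimately have i1: "integrable PP (\<lambda>z. \<phi> (snd z, fst z))" by (simp only:)
    have a1: "AE z in PP. \<phi> (snd z, fst z) = \<psi> z"
      using symAE by (auto simp: \<phi>_def \<psi>_def elim!: eventually_mono)
    show ?thesis by (rule integrable_cong_AE_imp[OF i1 _ a1]) measurable
  qed
  have ib: "integrable PP (\<lambda>z. H z * F z)"
    if "integrable PP H" and "F \<in> borel_measurable (borel \<Otimes>\<^sub>M borel)" "H \<in> borel_measurable (borel \<Otimes>\<^sub>M borel)"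
      and "\<And>z. \<bar>F z\<bar> \<le> 1" for F H :: "real \<times> real \<Rightarrow> real"
  proof (rule Bochner_Integration.integrable_bound[OF that(1)])
    have "(\<lambda>z. H z * F z) \<in> borel_measurable (borel \<Otimes>\<^sub>M borel)"
      by (rule borel_measurable_times[OF that(3) that(2)])
    then show "(\<lambda>z. H z * F z) \<in> borel_measurable PP" using bmPP[of "borel :: real measure"] by blast
    show "AE z in PP. norm (H z * F z) \<le> norm (H z)"
    proof (rule AE_I2)
      fix z
      have "\<bar>H z\<bar> * \<bar>F z\<bar> \<le> \<bar>H z\<bar>" using that(4)[of z] by (simp add: mult_left_le)
      then show "norm (H z * F z) \<le> norm (H z)" by (simp add: abs_mult)
    qed
  qed
  have bI: "\<bar>Igt z\<bar> \<le> 1" "\<bar>Ilt z\<bar> \<le> 1" "\<bar>Ieq z\<bar> \<le> 1" for z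
    by (auto simp: Igt_def Ilt_def Ieq_def indicator_def)
  have ints: "integrable PP (\<lambda>z. \<phi> z * Igt z)" "integrable PP (\<lambda>z. \<phi> z * Ilt z)"
    "integrable PP (\<lambda>z. \<phi> z * Ieq z)" "integrable PP (\<lambda>z. \<psi> z * Igt z)"
    "integrable PP (\<lambda>z. \<psi> z * Ilt z)"
    by (rule ib[OF int_phi Igt_m phi_m bI(1)], rule ib[OF int_phi Ilt_m phi_m bI(2)],
        rule ib[OF int_phi Ieq_m phi_m bI(3)], rule ib[OF int_psi Igt_m psi_m bI(1)],
        rule ib[OF int_psi Ilt_m psi_m bI(2)])
  define A where "A = (\<integral>z. \<phi> z * Igt z \<partial>PP)"
  define B where "B = (\<integral>z. \<phi> z * Ilt z \<partial>PP)"
  define C where "C = (\<integral>z. \<phi> z * Ieq z \<partial>PP)"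
  have swm: "(\<lambda>z. F (snd z, fst z)) \<in> borel_measurable (borel \<Otimes>\<^sub>M borel)"
    if "F \<in> borel_measurable (borel \<Otimes>\<^sub>M borel)" for F :: "real \<times> real \<Rightarrow> real"
    by (rule measurable_compose[OF measurable_Pair[OF measurable_snd measurable_fst] that])
  have congAE: "(\<integral>z. F z \<partial>PP) = (\<integral>z. H z \<partial>PP)"
    if "F \<in> borel_measurable (borel \<Otimes>\<^sub>M borel)" "H \<in> borel_measurable (borel \<Otimes>\<^sub>M borel)"
      "AE z in PP. F z = H z" for F H :: "real \<times> real \<Rightarrow> real"
  proof (rule integral_cong_AE)
    show "F \<in> borel_measurable PP" using that(1) bmPP[of "borel :: real measure"] by blast
    show "H \<in> borel_measurable PP" using that(2) bmPP[of "borel :: real measure"] by blast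
    show "AE z in PP. F z = H z" by (rule that(3))
  qed
  have m_pgt: "(\<lambda>z. \<psi> z * Igt z) \<in> borel_measurable (borel \<Otimes>\<^sub>M borel)"
    by (rule borel_measurable_times[OF psi_m Igt_m])
  have m_plt: "(\<lambda>z. \<psi> z * Ilt z) \<in> borel_measurable (borel \<Otimes>\<^sub>M borel)"
    by (rule borel_measurable_times[OF psi_m Ilt_m])
  have m_fgt: "(\<lambda>z. \<phi> z * Igt z) \<in> borel_measurable (borel \<Otimes>\<^sub>M borel)"
    by (rule borel_measurable_times[OF phi_m Igt_m])
  have m_flt: "(\<lambda>z. \<phi> z * Ilt z) \<in> borel_measurable (borel \<Otimes>\<^sub>M borel)"
    by (rule borel_measurable_times[OF phi_m Ilt_m])
  have sw1: "(\<integral>z. \<psi> z * Igt z \<partial>PP) = B"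
  proof -
    have "(\<integral>z. \<psi> z * Igt z \<partial>PP) = (\<integral>z. \<psi> (snd z, fst z) * Igt (snd z, fst z) \<partial>PP)"
      by (rule swap[OF m_pgt, symmetric])
    also have "\<dots> = B" unfolding B_def
    proof (rule congAE[OF swm[OF m_pgt] m_flt])
      show "AE z in PP. \<psi> (snd z, fst z) * Igt (snd z, fst z) = \<phi> z * Ilt z"
        using symAE by eventually_elim (simp add: \<phi>_def \<psi>_def Igt_def Ilt_def indicator_def)
    qed
    finally show ?thesis .
  qed
  have sw2: "(\<integral>z. \<psi> z * Ilt z \<partial>PP) = A"
  proof -
    have "(\<integral>z. \<psi> z * Ilt z \<partial>PP) = (\<integral>z. \<psi> (snd z, fst z) * Ilt (snd z, fst z) \<partial>PP)"
      by (rule swap[OF m_plt, symmetric])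
    also have "\<dots> = A" unfolding A_def
    proof (rule congAE[OF swm[OF m_plt] m_fgt])
      show "AE z in PP. \<psi> (snd z, fst z) * Ilt (snd z, fst z) = \<phi> z * Igt z"
        using symAE by eventually_elim (simp add: \<phi>_def \<psi>_def Igt_def Ilt_def indicator_def)
    qed
    finally show ?thesis .
  qed
  have TsG: "(\<integral>\<omega>. g (Xs \<omega>) (X \<omega>) * F (Xs \<omega>, X \<omega>) \<partial>M) = 1 / m * (\<integral>z. \<phi> z * F z \<partial>PP)"
    if Fm: "F \<in> borel_measurable (borel \<Otimes>\<^sub>M borel)" for F :: "real \<times> real \<Rightarrow> real"
  proof -
    have GF: "(\<lambda>z. G z * F z) \<in> borel_measurable (borel \<Otimes>\<^sub>M borel)"
      by (rule borel_measurable_times[OF Gm2 Fm])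
    have "(\<integral>\<omega>. g (Xs \<omega>) (X \<omega>) * F (Xs \<omega>, X \<omega>) \<partial>M) = (\<integral>\<omega>. (\<lambda>z. G z * F z) (Xs \<omega>, X \<omega>) \<partial>M)"
      unfolding G_def by simp
    also have "\<dots> = (\<integral>z. fst z / m * (G z * F z) \<partial>PP)" by (rule Ts[OF GF])
    also have "\<dots> = (\<integral>z. 1 / m * (\<phi> z * F z) \<partial>PP)"
      unfolding \<phi>_def by (rule Bochner_Integration.integral_cong) simp_all
    also have "\<dots> = 1 / m * (\<integral>z. \<phi> z * F z \<partial>PP)" by (rule integral_mult_right_zero)
    finally show ?thesis .
  qed
  have E1: "(\<integral>\<omega>. g (Xs \<omega>) (X \<omega>) * indicator {\<omega>. X \<omega> < Xs \<omega>} \<omega> \<partial>M) = 1 / m * A"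
    using TsG[OF Igt_m] unfolding A_def by (simp add: Igt_def indicator_def)
  have E3: "(\<integral>\<omega>. g (Xs \<omega>) (X \<omega>) * indicator {\<omega>. X \<omega> = Xs \<omega>} \<omega> \<partial>M) = 1 / m * C"
    using TsG[OF Ieq_m] unfolding C_def by (simp add: Ieq_def indicator_def eq_commute)
  have E2: "(\<integral>\<omega>. g (Xs \<omega>) (X \<omega>) \<partial>M) = 1 / m * (A + B + C)"
  proof -
    have "(\<integral>\<omega>. g (Xs \<omega>) (X \<omega>) \<partial>M) = 1 / m * (\<integral>z. \<phi> z * 1 \<partial>PP)"
      using TsG[OF measurable_const[of "1::real"]] by simp
    also have "(\<integral>z. \<phi> z * 1 \<partial>PP) = (\<integral>z. \<phi> z * Igt z + \<phi> z * Ilt z + \<phi> z * Ieq z \<partial>PP)"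
      by (intro Bochner_Integration.integral_cong) (auto simp: Igt_def Ilt_def Ieq_def indicator_def)
    also have "\<dots> = A + B + C" unfolding A_def B_def C_def using ints by simp
    finally show ?thesis .
  qed
  have L: "(\<integral>\<omega>. \<bar>X1 \<omega> - X2 \<omega>\<bar> * g (X1 \<omega>) (X2 \<omega>) \<partial>M) = 2 * (A - B)"
  proof -
    have "(\<integral>\<omega>. \<bar>X1 \<omega> - X2 \<omega>\<bar> * g (X1 \<omega>) (X2 \<omega>) \<partial>M) = (\<integral>\<omega>. (\<lambda>z. \<bar>fst z - snd z\<bar> * G z) (X1 \<omega>, X2 \<omega>) \<partial>M)"
      by (simp add: G_def)
    also have "\<dots> = (\<integral>z. \<bar>fst z - snd z\<bar> * G z \<partial>PP)" by (rule T12) measurable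
    also have "\<dots> = (\<integral>z. (\<phi> z * Igt z - \<psi> z * Igt z) + (\<psi> z * Ilt z - \<phi> z * Ilt z) \<partial>PP)"
      by (intro Bochner_Integration.integral_cong) (auto simp: \<phi>_def \<psi>_def Igt_def Ilt_def indicator_def algebra_simps)
    also have "\<dots> = (A - B) + (A - B)"
      using ints sw1 sw2 unfolding A_def B_def by simp
    finally show ?thesis by simp
  qed
  show ?thesis unfolding L E1 E2 E3 m_def[symmetric] using m0 by (simp add: field_simps)
qed

end
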